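(* Assume the Bellman setting below, hypotheses (H1) and (H2), and that $A(P)$ is monotone for every $P\in\mathcal P$. Let $(U^\ell)_{\ell\ge 0}$ be any sequence produced by $\epsilon$-policy iteration on $\mathcal P$ (defined below). Then $(U^\ell)_\ell$ converges to a solution of the Bellman problem $\sup_{P\in\mathcal P}\{-A(P)U+y(P)\}=0$, and this solution is unique.
   Context: Bellman setting: Let $M\ge 0$ be an integer and $\mathcal P=\mathcal P_0\times\cdots\times\mathcal P_M$ a product of nonempty sets; write $P=(P_0,\dots,P_M)\in\mathcal P$. Let $A:\mathcal P\to\mathbb R^{(M+1)\times(M+1)}$ and $y:\mathcal P\to\mathbb R^{M+1}$ be row-decoupled: for each $i$, the $i$-th row of $A(P)$ and the $i$-th entry of $y(P)$ depend only on $P_i$. Inequalities between vectors (or matrices) are entrywise, and the supremum of a family of vectors is taken entrywise. The Bellman problem is to find $U\in\mathbb R^{M+1}$ with $\sup_{P\in\mathcal P}\{-A(P)U+y(P)\}=0$. Let $\vec e=(1,\dots,1)^\top\in\mathbb R^{M+1}$. A real square matrix is monotone if it is nonsingular and its inverse has nonnegative entries. (H1): the map $P\mapsto A(P)^{-1}$ is bounded on $\{P\in\mathcal P: A(P)\text{ nonsingular}\}$. (H2): $A$ and $y$ are bounded functions. $\epsilon$-policy iteration on a set $\mathcal Q=\mathcal Q_0\times\cdots\times\mathcal Q_M$ (with $\emptyset\ne\mathcal Q_i\subseteq\mathcal P_i$): pick any $U^0\in\mathbb R^{M+1}$ and any sequence $(\epsilon^\ell)_{\ell\ge1}$ of positive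 numbers with $\sum_\ell\epsilon^\ell<\infty$; for $\ell=1,2,\dots$ pick $P^\ell\in\mathcal Q$ with $-A(P^\ell)U^{\ell-1}+y(P^\ell)+\epsilon^\ell\vec e\ge\sup_{P\in\mathcal Q}\{-A(P)U^{\ell-1}+y(P)\}$ and let $U^\ell$ be the solution of $A(P^\ell)U^\ell=y(P^\ell)$. *)

theory Defs
  imports "HOL-Analysis.Analysis"
begin

definition bellman_sup ::
  "('n \<Rightarrow> 'p) set \<Rightarrow> (('n \<Rightarrow> 'p) \<Rightarrow> real^'n^'n) \<Rightarrow> (('n \<Rightarrow> 'p) \<Rightarrow> real^'n)
     \<Rightarrow> real^'n \<Rightarrow> real^'n" where
  "bellman_sup Q A y U = (\<chi> i. SUP P\<in>Q. (- (A P *v U) + y P) $ i)"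

definition monotone_matrix :: "real^'n^'n \<Rightarrow> bool" where
  "monotone_matrix B \<longleftrightarrow> invertible B \<and> (\<forall>i j. 0 \<le> matrix_inv B $ i $ j)"

end

theory Submission imports Defs begin

lemma minv_left:
  fixes M :: "real^'n::finite^'m::finite"
  assumes "invertible M" shows "matrix_inv M ** M = mat 1"
  using assms unfolding invertible_def matrix_inv_def by (rule someI2_ex) auto

lemma mv_comp_bound:
  fixes M :: "real^'n::finite^'m::finite" and v :: "real^'n"
  assumes "norm M \<le> K"
  shows "\<bar>(M *v v) $ i\<bar> \<le> K * CARD('n) * norm v"
proof -
  have "\<bar>(M *v v) $ i\<bar> = \<bar>\<Sum>j\<in>UNIV. M$i$j * v$j\<bar>" by (simp add: matrix_vector_mult_def)
  also have "\<dots> \<le> (\<Sum>j\<in>UNIV. \<bar>M$i$j\<bar> * \<bar>v$j\<bar>)"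
    by (rule order_trans[OF sum_abs]) (simp add: abs_mult)
  also have "\<dots> \<le> (\<Sum>j\<in>(UNIV::'n set). K * norm v)"
  proof (rule sum_mono)
    fix j
    have "\<bar>M$i$j\<bar> \<le> K" using component_le_norm_cart[of "M$i" j] Finite_Cartesian_Product.norm_nth_le[of M i] assms by linarith
    moreover have "\<bar>v$j\<bar> \<le> norm v" by (rule component_le_norm_cart)
    ultimately show "\<bar>M$i$j\<bar> * \<bar>v$j\<bar> \<le> K * norm v" by (simp add: mult_mono)
  qed
  also have "\<dots> = K * CARD('n) * norm v" by simp
  finally show ?thesis .
qed

lemma mono_sol_le:
  fixes M :: "real^'n::finite^'n"
  assumes "monotone_matrix M" "\<And>i. (M *v x) $ i \<le> b $ i"
  shows "x $ i \<le> (matrix_inv M *v b) $ i"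
proof -
  have inv: "matrix_inv M ** M = mat 1" using assms(1) by (simp add: monotone_matrix_def minv_left)
  have x: "x = matrix_inv M *v (M *v x)" by (simp add: matrix_vector_mul_assoc inv)
  have "(matrix_inv M *v b) $ i - x $ i = (matrix_inv M *v (b - M *v x)) $ i"
    by (subst x) (simp add: matrix_vector_mult_diff_distrib)
  also have "\<dots> \<ge> 0"
  proof -
    have nn: "\<And>j. 0 \<le> (b - M *v x) $ j" using assms(2) by simp
    show ?thesis
    using assms(1) nn by (auto simp: monotone_matrix_def matrix_vector_mult_def[of "matrix_inv M"] intro!: sum_nonneg mult_nonneg_nonneg)
  qed
  finally show ?thesis by simp
qed

theorem theorem3p2:
  fixes Ps :: "'n::finite \<Rightarrow> 'p set"
    and A :: "('n \<Rightarrow> 'p) \<Rightarrow> real^'n^'n"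
    and y :: "('n \<Rightarrow> 'p) \<Rightarrow> real^'n"
    and U :: "nat \<Rightarrow> real^'n"
    and Pol :: "nat \<Rightarrow> ('n \<Rightarrow> 'p)"
    and eps :: "nat \<Rightarrow> real"
  assumes nonempty: "\<And>i. Ps i \<noteq> {}"
    and row_decoupled: "\<And>P P' i. P \<in> (\<Pi> j\<in>UNIV. Ps j) \<Longrightarrow> P' \<in> (\<Pi> j\<in>UNIV. Ps j) \<Longrightarrow>
          P i = P' i \<Longrightarrow> A P $ i = A P' $ i \<and> y P $ i = y P' $ i"
    and H1: "bounded {matrix_inv (A P) | P. P \<in> (\<Pi> j\<in>UNIV. Ps j) \<and> invertible (A P)}"
    and H2: "bounded (A ` (\<Pi> j\<in>UNIV. Ps j))" "bounded (y ` (\<Pi> j\<in>UNIV. Ps j))"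
    and mono: "\<And>P. P \<in> (\<Pi> j\<in>UNIV. Ps j) \<Longrightarrow> monotone_matrix (A P)"
    and eps_pos: "\<And>l. l \<ge> 1 \<Longrightarrow> 0 < eps l"
    and eps_sum: "summable eps"
    and pol_in: "\<And>l. l \<ge> 1 \<Longrightarrow> Pol l \<in> (\<Pi> j\<in>UNIV. Ps j)"
    and pol_eps: "\<And>l i. l \<ge> 1 \<Longrightarrow>
          (- (A (Pol l) *v U (l - 1)) + y (Pol l)) $ i + eps l
            \<ge> bellman_sup (\<Pi> j\<in>UNIV. Ps j) A y (U (l - 1)) $ i"
    and solve: "\<And>l. l \<ge> 1 \<Longrightarrow> A (Pol l) *v U l = y (Pol l)"
  shows "\<exists>Ustar. U \<longlonglongrightarrow> Ustar
           \<and> bellman_sup (\<Pi> j\<in>UNIV. Ps j) A y Ustar = 0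
           \<and> (\<forall>V. bellman_sup (\<Pi> j\<in>UNIV. Ps j) A y V = 0 \<longrightarrow> V = Ustar)"
proof -
  let ?PP = "\<Pi> j\<in>UNIV. Ps j"
  let ?B = "bellman_sup ?PP A y"
  let ?e = "vec 1 :: real^'n"
  define N where "N = real CARD('n)"
  have inv: "\<And>P. P \<in> ?PP \<Longrightarrow> invertible (A P)" using mono by (simp add: monotone_matrix_def)
  obtain KI where KI: "\<And>P. P \<in> ?PP \<Longrightarrow> norm (matrix_inv (A P)) \<le> KI"
    using H1 inv unfolding bounded_iff by blast
  obtain KA where KA: "\<And>P. P \<in> ?PP \<Longrightarrow> norm (A P) \<le> KA"
    using H2(1) unfolding bounded_iff by auto
  obtain KY where KY: "\<And>P. P \<in> ?PP \<Longrightarrow> norm (y P) \<le> KY"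
    using H2(2) unfolding bounded_iff by auto
  define P0 where "P0 = (\<lambda>j. SOME x. x \<in> Ps j)"
  have P0: "P0 \<in> ?PP" using nonempty by (auto simp: P0_def some_in_eq)
  have PPne: "?PP \<noteq> {}" using P0 by blast
  have KA0: "0 \<le> KA" using KA[OF P0] norm_ge_zero[of "A P0"] by linarith
  have KI0: "0 \<le> KI" using KI[OF P0] norm_ge_zero[of "matrix_inv (A P0)"] by linarith
  have KY0: "0 \<le> KY" using KY[OF P0] norm_ge_zero[of "y P0"] by linarith
  have N0: "0 \<le> N" by (simp add: N_def)
  define C where "C = KI * N * norm ?e"
  have C0: "0 \<le> C" using KI0 N0 by (simp add: C_def)
  have epsb: "x $ i \<le> c * C" if P: "P \<in> ?PP" and c0: "0 \<le> c"
      and h: "\<And>k. (A P *v x) $ k \<le> c" for P x c i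
  proof -
    have "x $ i \<le> (matrix_inv (A P) *v (c *\<^sub>R ?e)) $ i"
      by (rule mono_sol_le[OF mono[OF P]]) (simp add: h)
    also have "\<dots> \<le> KI * N * norm (c *\<^sub>R ?e)"
      using mv_comp_bound[OF KI[OF P], of "c *\<^sub>R ?e" i] by (simp add: N_def)
    also have "\<dots> = c * C" using c0 by (simp add: C_def)
    finally show ?thesis .
  qed
  have bdd: "bdd_above ((\<lambda>P. (- (A P *v V) + y P) $ i) ` ?PP)" for V i
  proof -
    have "\<forall>P\<in>?PP. (- (A P *v V) + y P) $ i \<le> KA * N * norm V + KY"
    proof
      fix P assume P: "P \<in> ?PP"
      have "\<bar>(A P *v V) $ i\<bar> \<le> KA * N * norm V" using mv_comp_bound[OF KA[OF P]] N_def by simp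
      moreover have "\<bar>y P $ i\<bar> \<le> KY" using component_le_norm_cart[of "y P" i] KY[OF P] by linarith
      ultimately show "(- (A P *v V) + y P) $ i \<le> KA * N * norm V + KY" by simp
    qed
    thus ?thesis by (auto intro: bdd_aboveI2)
  qed
  have Bge: "(- (A P *v V) + y P) $ i \<le> ?B V $ i" if "P \<in> ?PP" for V P i
    unfolding bellman_sup_def vec_lambda_beta by (rule cSUP_upper[OF that bdd])
  have step: "U l $ i - U (Suc l) $ i \<le> eps (Suc l) * C" if l: "l \<ge> 1" for l i
  proof -
    have "(A (Pol (Suc l)) *v (U l - U (Suc l))) $ k \<le> eps (Suc l)" for k
    proof -
      have "0 \<le> ?B (U l) $ k"
        using Bge[OF pol_in[OF l], of "U l" k] solve[OF l] by simp
      also have "\<dots> \<le> (- (A (Pol (Suc l)) *v U l) + y (Pol (Suc l))) $ k + eps (Suc l)"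
        using pol_eps[of "Suc l" k] by simp
      finally show ?thesis using solve[of "Suc l"] by (simp add: matrix_vector_mult_diff_distrib)
    qed
    from epsb[OF pol_in[of "Suc l"] _ this] eps_pos[of "Suc l"]
    show ?thesis by simp
  qed
  have Ubd: "\<bar>U l $ i\<bar> \<le> KI * N * KY" if l: "l \<ge> 1" for l i
  proof -
    have "U l = matrix_inv (A (Pol l)) *v (A (Pol l) *v U l)"
      by (simp add: matrix_vector_mul_assoc minv_left[OF inv[OF pol_in[OF l]]])
    hence "U l = matrix_inv (A (Pol l)) *v y (Pol l)" using solve[OF l] by simp
    hence "\<bar>U l $ i\<bar> \<le> KI * N * norm (y (Pol l))"
      using mv_comp_bound[OF KI[OF pol_in[OF l]], of "y (Pol l)" i] by (simp add: N_def)
    also have "\<dots> \<le> KI * N * KY" using KY[OF pol_in[OF l]] KI0 N0 by (simp add: mult_left_mono)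
    finally show ?thesis .
  qed
  have conv: "\<exists>L. (\<lambda>n. U (Suc n) $ i) \<longlonglongrightarrow> L" for i
  proof -
    define S where "S n = (\<Sum>k<n. eps (Suc (Suc k)))" for n
    define W where "W n = U (Suc n) $ i + C * S n" for n
    have inc: "incseq W"
    proof (rule incseq_SucI)
      fix n
      have "U (Suc n) $ i - U (Suc (Suc n)) $ i \<le> eps (Suc (Suc n)) * C" by (rule step) simp
      thus "W n \<le> W (Suc n)" by (simp add: W_def S_def algebra_simps)
    qed
    have sm: "summable (\<lambda>k. eps (Suc (Suc k)))" using eps_sum summable_Suc_iff[of eps] summable_Suc_iff[of "\<lambda>k. eps (Suc k)"] by simp
    have "W n \<le> KI * N * KY + C * (\<Sum>k. eps (Suc (Suc k)))" for n
    proof -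
      have "U (Suc n) $ i \<le> KI * N * KY" using Ubd[of "Suc n" i] by simp
      moreover have "S n \<le> (\<Sum>k. eps (Suc (Suc k)))" unfolding S_def
        by (rule sum_le_suminf[OF sm]) (auto simp: eps_pos less_imp_le)
      hence "C * S n \<le> C * (\<Sum>k. eps (Suc (Suc k)))" using C0 by (simp add: mult_left_mono)
      ultimately show ?thesis by (simp add: W_def)
    qed
    hence "bdd_above (range W)" by (metis bdd_aboveI2)
    from LIMSEQ_incseq_SUP[OF this inc] obtain LW where LW: "W \<longlonglongrightarrow> LW" by blast
    have LS: "S \<longlonglongrightarrow> (\<Sum>k. eps (Suc (Suc k)))" unfolding S_def using sm by (rule summable_LIMSEQ)
    have "(\<lambda>n. W n - C * S n) \<longlonglongrightarrow> LW - C * (\<Sum>k. eps (Suc (Suc k)))"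
      by (intro tendsto_intros LW LS)
    moreover have "(\<lambda>n. W n - C * S n) = (\<lambda>n. U (Suc n) $ i)" by (simp add: W_def)
    ultimately show ?thesis by auto
  qed
  then obtain Lf where Lf: "\<And>i. (\<lambda>n. U (Suc n) $ i) \<longlonglongrightarrow> Lf i" by metis
  define Ustar where "Ustar = (\<chi> i. Lf i)"
  have "(\<lambda>n. U (Suc n)) \<longlonglongrightarrow> Ustar" by (rule vec_tendstoI) (simp add: Ustar_def Lf)
  hence lim: "U \<longlonglongrightarrow> Ustar" by (rule LIMSEQ_imp_Suc)
  have n0: "(\<lambda>l. norm (U l - Ustar)) \<longlonglongrightarrow> 0"
  proof -
    have "(\<lambda>l. norm (U l - Ustar)) \<longlonglongrightarrow> norm (Ustar - Ustar)" by (intro tendsto_intros lim)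
    thus ?thesis by simp
  qed
  have n1: "(\<lambda>l. norm (U (Suc l) - U l)) \<longlonglongrightarrow> 0"
  proof -
    have "(\<lambda>l. norm (U (Suc l) - U l)) \<longlonglongrightarrow> norm (Ustar - Ustar)"
      by (intro tendsto_intros lim LIMSEQ_Suc)
    thus ?thesis by simp
  qed
  have eps0: "eps \<longlonglongrightarrow> 0" by (rule summable_LIMSEQ_zero[OF eps_sum])
  have Bstar: "?B Ustar = 0"
  proof (rule vec_eq_iff[THEN iffD2], rule allI)
    fix i
    have ge: "0 \<le> ?B Ustar $ i"
    proof (rule tendsto_upperbound)
      show "(\<lambda>l. - (KA * N * norm (U l - Ustar))) \<longlonglongrightarrow> 0"
        using tendsto_minus[OF tendsto_mult_left[OF n0, of "KA * N"]] by simp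
      show "\<forall>\<^sub>F l in sequentially. - (KA * N * norm (U l - Ustar)) \<le> ?B Ustar $ i"
        unfolding eventually_sequentially
      proof (intro exI allI impI)
        fix l :: nat assume l: "1 \<le> l"
        have "\<bar>(A (Pol l) *v (U l - Ustar)) $ i\<bar> \<le> KA * N * norm (U l - Ustar)"
          using mv_comp_bound[OF KA[OF pol_in[OF l]]] by (simp add: N_def)
        moreover have "(A (Pol l) *v (U l - Ustar)) $ i = (- (A (Pol l) *v Ustar) + y (Pol l)) $ i"
          using solve[OF l] by (simp add: matrix_vector_mult_diff_distrib)
        moreover note Bge[OF pol_in[OF l], of Ustar i]
        ultimately show "- (KA * N * norm (U l - Ustar)) \<le> ?B Ustar $ i" by linarith
      qed
    qed simp
    have le: "?B Ustar $ i \<le> 0"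
      unfolding bellman_sup_def vec_lambda_beta
    proof (rule cSUP_least[OF PPne])
      fix P assume P: "P \<in> ?PP"
      show "(- (A P *v Ustar) + y P) $ i \<le> 0"
      proof (rule tendsto_le[OF _ _ _ ])
        show "sequentially \<noteq> bot" by simp
        show "(\<lambda>l. (- (A P *v U l) + y P) $ i) \<longlonglongrightarrow> (- (A P *v Ustar) + y P) $ i"
          by (intro tendsto_intros bounded_linear.tendsto[OF matrix_vector_mul_bounded_linear] lim)
        show "(\<lambda>l. KA * N * norm (U (Suc l) - U l) + eps (Suc l)) \<longlonglongrightarrow> 0"
          using tendsto_add[OF tendsto_mult_left[OF n1, of "KA * N"] LIMSEQ_Suc[OF eps0]] by simp
        show "\<forall>\<^sub>F l in sequentially. (- (A P *v U l) + y P) $ i \<le> KA * N * norm (U (Suc l) - U l) + eps (Suc l)"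
          unfolding eventually_sequentially
        proof (intro exI allI impI)
          fix l :: nat assume l: "1 \<le> l"
          have "(- (A P *v U l) + y P) $ i \<le> ?B (U l) $ i" by (rule Bge[OF P])
          also have "\<dots> \<le> (- (A (Pol (Suc l)) *v U l) + y (Pol (Suc l))) $ i + eps (Suc l)"
            using pol_eps[of "Suc l" i] by simp
          also have "(- (A (Pol (Suc l)) *v U l) + y (Pol (Suc l))) $ i = (A (Pol (Suc l)) *v (U (Suc l) - U l)) $ i"
            using solve[of "Suc l"] by (simp add: matrix_vector_mult_diff_distrib)
          also have "\<dots> \<le> KA * N * norm (U (Suc l) - U l)"
            using mv_comp_bound[OF KA[OF pol_in[of "Suc l"]], of "U (Suc l) - U l" i] by (simp add: N_def)
          finally show "(- (A P *v U l) + y P) $ i \<le> KA * N * norm (U (Suc l) - U l) + eps (Suc l)"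
            by simp
        qed
      qed
    qed
    show "?B Ustar $ i = 0 $ i" using ge le by simp
  qed
  have rowdep: "(M *v V) $ k = (M' *v V) $ k" if "M $ k = M' $ k" for M M' :: "real^'n^'n" and V k
    using that by (simp add: matrix_vector_mult_def)
  have uniq: "V $ i \<le> W $ i" if BV: "?B V = 0" and BW: "?B W = 0" for V W i
  proof (rule field_le_epsilon)
    fix t :: real assume t: "0 < t"
    define d where "d = t / (C + 1)"
    have d: "0 < d" using t C0 by (simp add: d_def)
    have "\<exists>Q. Q \<in> ?PP \<and> - d < (- (A Q *v V) + y Q) $ k" for k
    proof -
      have "- d < ?B V $ k" using BV d by simp
      hence "- d < (SUP P\<in>?PP. (- (A P *v V) + y P) $ k)" by (simp add: bellman_sup_def)
      thus ?thesis using less_cSUP_iff[OF PPne bdd] by blast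
    qed
    then obtain Q where Q: "\<And>k. Q k \<in> ?PP" "\<And>k. - d < (- (A (Q k) *v V) + y (Q k)) $ k" by metis
    define P where "P = (\<lambda>j. Q j j)"
    have P: "P \<in> ?PP" using Q(1) by (auto simp: P_def)
    have "(A P *v (V - W)) $ k \<le> d" for k
    proof -
      have rd: "A P $ k = A (Q k) $ k \<and> y P $ k = y (Q k) $ k"
        by (rule row_decoupled[OF P Q(1)]) (simp add: P_def)
      have "(- (A P *v V) + y P) $ k = (- (A (Q k) *v V) + y (Q k)) $ k"
        using rd rowdep[of "A P" k "A (Q k)" V] by simp
      with Q(2)[of k] have 1: "(A P *v V) $ k - y P $ k < d" by simp
      have "(- (A P *v W) + y P) $ k \<le> ?B W $ k" by (rule Bge[OF P])
      hence 2: "0 \<le> (A P *v W) $ k - y P $ k" using BW by simp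
      from 1 2 show ?thesis by (simp add: matrix_vector_mult_diff_distrib)
    qed
    from epsb[OF P _ this] d have "(V - W) $ i \<le> d * C" by simp
    moreover have "d * C \<le> t"
    proof -
      have "d * C \<le> d * (C + 1)" using d by simp
      also have "\<dots> = t" using C0 by (simp add: d_def)
      finally show ?thesis .
    qed
    ultimately show "V $ i \<le> W $ i + t" by simp
  qed
  show ?thesis
  proof (intro exI conjI allI impI)
    show "U \<longlonglongrightarrow> Ustar" by (rule lim)
    show "?B Ustar = 0" by (rule Bstar)
    fix V assume "?B V = 0"
    thus "V = Ustar" using uniq Bstar by (simp add: vec_eq_iff antisym)
  qed
qed

end
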